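(* Let $(g,p)$ be any mechanism and let $(v,x,y)$ be a random triple with values in $\mathcal V^{n\times m}\times\mathcal X^n\times\mathcal Y^m$. (a) If the law of $(v,x,y)$ is bidder-symmetric, set $\mathcal Q=\mathcal Q_1$ and $\Delta=\Delta_1$; (b) if the law of $(v,x,y)$ is item-symmetric, set $\mathcal Q=\mathcal Q_2$ and $\Delta=\Delta_2$. In either case $$\mathbb E\Big[\sum_{i=1}^n[\mathcal Q p]_i(v,x,y)\Big]=\mathbb E\Big[\sum_{i=1}^n p_i(v,x,y)\Big]$$ and $$\mathbb E\Big[\sum_{i=1}^n reg_i(v,x,y)\Big]-\mathbb E\Big[\sum_{i=1}^n[\mathcal Q\, reg]_i(v,x,y)\Big]=\mathbb E\big[\Delta(g,p;v,x,y)\big]\ge0 .$$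
   Context: Setup: there are $n$ bidders and $m$ items. Bidder contexts $x=(x_1,\dots,x_n)\in\mathcal X^n$, item contexts $y=(y_1,\dots,y_m)\in\mathcal Y^m$, and a valuation (or bid) profile is a matrix $v=(v_{ij})\in\mathcal V^{n\times m}$ with $\mathcal V\subseteq\mathbb R_{\ge0}$; $v_i$ denotes row $i$, and for $v'\in\mathcal V^{n\times m}$ (or $v_i'\in\mathcal V^m$), $(v_i',v_{-i})$ is the matrix obtained from $v$ by replacing row $i$ with $v_i'$. A mechanism is a pair $(g,p)$ with allocation rule $g:\mathcal V^{n\times m}\times\mathcal X^n\times\mathcal Y^m\to\mathbb R^{n\times m}$ and payment rule $p:\mathcal V^{n\times m}\times\mathcal X^n\times\mathcal Y^m\to\mathbb R^{n}$ (an $n\times1$ column vector). The utility of bidder $i$ with valuation $v_i$ under bid profile $b$ is $u_i(v_i,b,x,y)=\sum_{j=1}^m g_{ij}(b,x,y)v_{ij}-p_i(b,x,y)$, and the ex-post regret is $reg_i(v,x,y)=\max_{b_i'\in\mathcal V^m}u_i(v_i,(b_i',v_{-i}),x,y)-u_i(v_i,v,x,y)$. For a permutation matrix $\sigma_n\in S_n$, $\sigma_n v$ permutes the rows of $v$, $\sigma_n x$ permutes bidder contexts accordingly, $\sigma_n p$ permutes entries of $p$; for $\sigma_m\in S_m$, $v\sigma_m$ permutes columns of $v$ and $y\sigma_m$ permutes item contexts accordingly. Bidder averaging: $\mathcal Q_1 g(v,x,y)=\frac1{n!}\sum_{\sigma_n}\sigma_n^{-1}g(\sigma_nv,\sigma_nx,y)$,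 $\mathcal Q_1 p(v,x,y)=\frac1{n!}\sum_{\sigma_n}\sigma_n^{-1}p(\sigma_nv,\sigma_nx,y)$. Item averaging: $\mathcal Q_2 g(v,x,y)=\frac1{m!}\sum_{\sigma_m}g(v\sigma_m,x,y\sigma_m)\sigma_m^{-1}$, $\mathcal Q_2 p(v,x,y)=\frac1{m!}\sum_{\sigma_m}p(v\sigma_m,x,y\sigma_m)$. For an averaging $\mathcal Q$, $\mathcal Q u$ and $\mathcal Q\,reg$ denote the utility and ex-post regret induced (by the formulas above) by the mechanism $(\mathcal Q g,\mathcal Q p)$. The regret gap is $\Delta_\cdot(g,p;v,x,y)=\max_{v'\in\mathcal V^{n\times m}}\sum_{i=1}^n u_i(v_i,(v_i',v_{-i}),x,y)-\max_{v'\in\mathcal V^{n\times m}}\sum_{i=1}^n[\mathcal Q_\cdot u]_i(v_i,(v_i',v_{-i}),x,y)$ with $\mathcal Q_\cdot\in\{\mathcal Q_1,\mathcal Q_2\}$ giving $\Delta_1,\Delta_2$. The law of $(v,x,y)$ is bidder-symmetric if $(\sigma_nv,\sigma_nx,y)$ has the same law as $(v,x,y)$ for every $\sigma_n\in S_n$, and item-symmetric if $(v\sigma_m,x,y\sigma_m)$ has the same law as $(v,x,y)$ for every $\sigma_m\in S_m$. All maxima are assumed attained, and all functions measurable with finite expectations. *)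

theory Defs
  imports "HOL-Probability.Probability" "HOL-Combinatorics.Permutations"
begin

text \<open>Bidders are indexed by a finite type 'n, items by a finite type 'm.
  A valuation/bid profile is a matrix v :: 'n => 'm => real; row i is v i.
  Bidder contexts x :: 'n => 'x, item contexts y :: 'm => 'y.\<close>

type_synonym ('n,'m) prof = "'n \<Rightarrow> 'm \<Rightarrow> real"
type_synonym ('n,'m,'x,'y) alloc =
  "('n,'m) prof \<Rightarrow> ('n \<Rightarrow> 'x) \<Rightarrow> ('m \<Rightarrow> 'y) \<Rightarrow> 'n \<Rightarrow> 'm \<Rightarrow> real"
type_synonym ('n,'m,'x,'y) pay =
  "('n,'m) prof \<Rightarrow> ('n \<Rightarrow> 'x) \<Rightarrow> ('m \<Rightarrow> 'y) \<Rightarrow> 'n \<Rightarrow> real"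

definition bids :: "real set \<Rightarrow> ('m \<Rightarrow> real) set" where
  "bids V = {b. \<forall>j. b j \<in> V}"

definition profiles :: "real set \<Rightarrow> ('n,'m) prof set" where
  "profiles V = {v. \<forall>i j. v i j \<in> V}"

text \<open>u_i(v_i, b, x, y); (b_i', v_-i) is written v(i := b').\<close>
definition utility ::
  "('n::finite,'m::finite,'x,'y) alloc \<Rightarrow> ('n,'m,'x,'y) pay \<Rightarrow> 'n \<Rightarrow> ('m \<Rightarrow> real)
    \<Rightarrow> ('n,'m) prof \<Rightarrow> ('n \<Rightarrow> 'x) \<Rightarrow> ('m \<Rightarrow> 'y) \<Rightarrow> real" where
  "utility g p i vi b x y = (\<Sum>j\<in>UNIV. g b x y i j * vi j) - p b x y i"

text \<open>Ex-post regret (the maximum is written as a supremum; attainment is assumed separately).\<close>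
definition regret ::
  "real set \<Rightarrow> ('n::finite,'m::finite,'x,'y) alloc \<Rightarrow> ('n,'m,'x,'y) pay \<Rightarrow> 'n
    \<Rightarrow> ('n,'m) prof \<Rightarrow> ('n \<Rightarrow> 'x) \<Rightarrow> ('m \<Rightarrow> 'y) \<Rightarrow> real" where
  "regret V g p i v x y =
     (SUP b\<in>bids V. utility g p i (v i) (v(i := b)) x y) - utility g p i (v i) v x y"

definition max_attained ::
  "real set \<Rightarrow> ('n::finite,'m::finite,'x,'y) alloc \<Rightarrow> ('n,'m,'x,'y) pay \<Rightarrow> bool" where
  "max_attained V g p \<longleftrightarrow>
     (\<forall>v\<in>profiles V. \<forall>x y i. \<exists>b\<in>bids V. \<forall>b'\<in>bids V.
        utility g p i (v i) (v(i := b')) x y \<le> utility g p i (v i) (v(i := b)) x y)"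

definition regret_gap ::
  "real set \<Rightarrow> ('n::finite,'m::finite,'x,'y) alloc \<Rightarrow> ('n,'m,'x,'y) pay
    \<Rightarrow> ('n,'m,'x,'y) alloc \<Rightarrow> ('n,'m,'x,'y) pay
    \<Rightarrow> ('n,'m) prof \<Rightarrow> ('n \<Rightarrow> 'x) \<Rightarrow> ('m \<Rightarrow> 'y) \<Rightarrow> real" where
  "regret_gap V g p g' p' v x y =
     (SUP v'\<in>profiles V. \<Sum>i\<in>UNIV. utility g p i (v i) (v(i := v' i)) x y)
   - (SUP v'\<in>profiles V. \<Sum>i\<in>UNIV. utility g' p' i (v i) (v(i := v' i)) x y)"

text \<open>Bidder averaging Q1. A permutation matrix sigma_n corresponds to a permutation
  pi of the bidders with (sigma_n v)_k = v_(pi k); then (sigma_n^-1 r)_i = r_(pi^-1 i).\<close>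
definition Q1g :: "('n::finite,'m::finite,'x,'y) alloc \<Rightarrow> ('n,'m,'x,'y) alloc" where
  "Q1g g v x y = (\<lambda>i j. (\<Sum>\<pi>\<in>{\<pi>. \<pi> permutes (UNIV::'n set)}.
       g (\<lambda>k. v (\<pi> k)) (\<lambda>k. x (\<pi> k)) y (inv \<pi> i) j) / real (fact CARD('n)))"

definition Q1p :: "('n::finite,'m::finite,'x,'y) pay \<Rightarrow> ('n,'m,'x,'y) pay" where
  "Q1p p v x y = (\<lambda>i. (\<Sum>\<pi>\<in>{\<pi>. \<pi> permutes (UNIV::'n set)}.
       p (\<lambda>k. v (\<pi> k)) (\<lambda>k. x (\<pi> k)) y (inv \<pi> i)) / real (fact CARD('n)))"

text \<open>Item averaging Q2: (v sigma_m)_(k,l) = v_(k, tau l), (y sigma_m)_l = y_(tau l),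
  (G sigma_m^-1)_(i,j) = G_(i, tau^-1 j).\<close>
definition Q2g :: "('n::finite,'m::finite,'x,'y) alloc \<Rightarrow> ('n,'m,'x,'y) alloc" where
  "Q2g g v x y = (\<lambda>i j. (\<Sum>\<tau>\<in>{\<tau>. \<tau> permutes (UNIV::'m set)}.
       g (\<lambda>k l. v k (\<tau> l)) x (\<lambda>l. y (\<tau> l)) i (inv \<tau> j)) / real (fact CARD('m)))"

definition Q2p :: "('n::finite,'m::finite,'x,'y) pay \<Rightarrow> ('n,'m,'x,'y) pay" where
  "Q2p p v x y = (\<lambda>i. (\<Sum>\<tau>\<in>{\<tau>. \<tau> permutes (UNIV::'m set)}.
       p (\<lambda>k l. v k (\<tau> l)) x (\<lambda>l. y (\<tau> l)) i) / real (fact CARD('m)))"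

definition bidder_perm :: "('n \<Rightarrow> 'n) \<Rightarrow> ('n,'m) prof \<times> ('n \<Rightarrow> 'x) \<times> ('m \<Rightarrow> 'y)
    \<Rightarrow> ('n,'m) prof \<times> ('n \<Rightarrow> 'x) \<times> ('m \<Rightarrow> 'y)" where
  "bidder_perm \<pi> = (\<lambda>(v,x,y). (\<lambda>k. v (\<pi> k), \<lambda>k. x (\<pi> k), y))"

definition item_perm :: "('m \<Rightarrow> 'm) \<Rightarrow> ('n,'m) prof \<times> ('n \<Rightarrow> 'x) \<times> ('m \<Rightarrow> 'y)
    \<Rightarrow> ('n,'m) prof \<times> ('n \<Rightarrow> 'x) \<times> ('m \<Rightarrow> 'y)" where
  "item_perm \<tau> = (\<lambda>(v,x,y). (\<lambda>k l. v k (\<tau> l), x, \<lambda>l. y (\<tau> l)))"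

definition bidder_symmetric ::
  "(('n::finite,'m::finite) prof \<times> ('n \<Rightarrow> 'x) \<times> ('m \<Rightarrow> 'y)) measure \<Rightarrow> bool" where
  "bidder_symmetric M \<longleftrightarrow> (\<forall>\<pi>. \<pi> permutes (UNIV::'n set) \<longrightarrow>
      bidder_perm \<pi> \<in> M \<rightarrow>\<^sub>M M \<and> distr M M (bidder_perm \<pi>) = M)"

definition item_symmetric ::
  "(('n::finite,'m::finite) prof \<times> ('n \<Rightarrow> 'x) \<times> ('m \<Rightarrow> 'y)) measure \<Rightarrow> bool" where
  "item_symmetric M \<longleftrightarrow> (\<forall>\<tau>. \<tau> permutes (UNIV::'m set) \<longrightarrow>
      item_perm \<tau> \<in> M \<rightarrow>\<^sub>M M \<and> distr M M (item_perm \<tau>) = M)"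

definition finite_expectations ::
  "(('n::finite,'m::finite) prof \<times> ('n \<Rightarrow> 'x) \<times> ('m \<Rightarrow> 'y)) measure \<Rightarrow> real set
    \<Rightarrow> ('n,'m,'x,'y) alloc \<Rightarrow> ('n,'m,'x,'y) pay
    \<Rightarrow> ('n,'m,'x,'y) alloc \<Rightarrow> ('n,'m,'x,'y) pay \<Rightarrow> bool" where
  "finite_expectations M V g p g' p' \<longleftrightarrow>
     (\<forall>i. integrable M (\<lambda>(v,x,y). p v x y i)
        \<and> integrable M (\<lambda>(v,x,y). p' v x y i)
        \<and> integrable M (\<lambda>(v,x,y). \<Sum>j\<in>UNIV. g v x y i j * v i j)
        \<and> integrable M (\<lambda>(v,x,y). \<Sum>j\<in>UNIV. g' v x y i j * v i j)
        \<and> integrable M (\<lambda>(v,x,y). regret V g p i v x y)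
        \<and> integrable M (\<lambda>(v,x,y). regret V g' p' i v x y))
     \<and> integrable M (\<lambda>(v,x,y). regret_gap V g p g' p' v x y)"

end

theory Submission
  imports Defs
begin


lemma avg_integral:
  fixes f :: "'s \<Rightarrow> real"
  assumes fin: "finite P" and ne: "P \<noteq> {}"
    and T: "\<And>a. a \<in> P \<Longrightarrow> T a \<in> M \<rightarrow>\<^sub>M M \<and> distr M M (T a) = M"
    and f: "integrable M f"
  shows "integrable M (\<lambda>s. (\<Sum>a\<in>P. f (T a s)) / real (card P))"
    and "integral\<^sup>L M (\<lambda>s. (\<Sum>a\<in>P. f (T a s)) / real (card P)) = integral\<^sup>L M f"
proof -
  have fm: "f \<in> borel_measurable M" using f by auto
  have I: "integrable M (\<lambda>s. f (T a s))" if "a \<in> P" for a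
    using integrable_distr_eq[of "T a" M M f] T[OF that] fm f by simp
  have E: "integral\<^sup>L M (\<lambda>s. f (T a s)) = integral\<^sup>L M f" if "a \<in> P" for a
    using integral_distr[of "T a" M M f] T[OF that] fm by simp
  show "integrable M (\<lambda>s. (\<Sum>a\<in>P. f (T a s)) / real (card P))"
    using I by auto
  have "integral\<^sup>L M (\<lambda>s. (\<Sum>a\<in>P. f (T a s)) / real (card P))
      = (\<Sum>a\<in>P. integral\<^sup>L M (\<lambda>s. f (T a s))) / real (card P)"
    using I by (simp add: integral_sum)
  also have "\<dots> = integral\<^sup>L M f"
    using E fin ne by simp
  finally show "integral\<^sup>L M (\<lambda>s. (\<Sum>a\<in>P. f (T a s)) / real (card P)) = integral\<^sup>L M f" .
qed

lemma abstract_main: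
  fixes Pq Pp U Uq R Rq gap reg reg' :: "'s \<Rightarrow> real"
  assumes fin: "finite P" and ne: "P \<noteq> {}"
    and T: "\<And>a. a \<in> P \<Longrightarrow> T a \<in> M \<rightarrow>\<^sub>M M \<and> distr M M (T a) = M"
    and hP: "\<And>s. s \<in> space M \<Longrightarrow> Pq s = (\<Sum>a\<in>P. Pp (T a s)) / real (card P)"
    and hU: "\<And>s. s \<in> space M \<Longrightarrow> Uq s = (\<Sum>a\<in>P. U (T a s)) / real (card P)"
    and hR: "\<And>s. s \<in> space M \<Longrightarrow> Rq s \<le> (\<Sum>a\<in>P. R (T a s)) / real (card P)"
    and hgap: "\<And>s. s \<in> space M \<Longrightarrow> gap s = R s - Rq s"
    and hreg: "\<And>s. s \<in> space M \<Longrightarrow> reg s = R s - U s"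
    and hreg': "\<And>s. s \<in> space M \<Longrightarrow> reg' s = Rq s - Uq s"
    and iP: "integrable M Pp" and iU: "integrable M U" and iR: "integrable M R"
    and iRq: "integrable M Rq"
  shows "integral\<^sup>L M Pq = integral\<^sup>L M Pp
    \<and> integral\<^sup>L M reg - integral\<^sup>L M reg' = integral\<^sup>L M gap
    \<and> integral\<^sup>L M gap \<ge> 0"
proof -
  have "integral\<^sup>L M Pq = integral\<^sup>L M (\<lambda>s. (\<Sum>a\<in>P. Pp (T a s)) / real (card P))"
    by (rule Bochner_Integration.integral_cong[OF refl]) (auto simp: hP)
  also have "\<dots> = integral\<^sup>L M Pp" by (rule avg_integral(2)[OF fin ne T iP])
  finally have 1: "integral\<^sup>L M Pq = integral\<^sup>L M Pp" .
  have iUa: "integrable M (\<lambda>s. (\<Sum>a\<in>P. U (T a s)) / real (card P))"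
    by (rule avg_integral(1)[OF fin ne T iU])
  have iUq: "integrable M Uq"
    using iUa Bochner_Integration.integrable_cong[of M M Uq "\<lambda>s. (\<Sum>a\<in>P. U (T a s)) / real (card P)"] hU by simp
  have EUq: "integral\<^sup>L M Uq = integral\<^sup>L M U"
  proof -
    have "integral\<^sup>L M Uq = integral\<^sup>L M (\<lambda>s. (\<Sum>a\<in>P. U (T a s)) / real (card P))"
      by (rule Bochner_Integration.integral_cong[OF refl]) (auto simp: hU)
    also have "\<dots> = integral\<^sup>L M U" by (rule avg_integral(2)[OF fin ne T iU])
    finally show ?thesis .
  qed
  have Ereg: "integral\<^sup>L M reg = integral\<^sup>L M R - integral\<^sup>L M U"
  proof -
    have "integral\<^sup>L M reg = integral\<^sup>L M (\<lambda>s. R s - U s)"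
      by (rule Bochner_Integration.integral_cong[OF refl]) (auto simp: hreg)
    then show ?thesis using iR iU by simp
  qed
  have Ereg': "integral\<^sup>L M reg' = integral\<^sup>L M Rq - integral\<^sup>L M Uq"
  proof -
    have "integral\<^sup>L M reg' = integral\<^sup>L M (\<lambda>s. Rq s - Uq s)"
      by (rule Bochner_Integration.integral_cong[OF refl]) (auto simp: hreg')
    then show ?thesis using iRq iUq by simp
  qed
  have Egap: "integral\<^sup>L M gap = integral\<^sup>L M R - integral\<^sup>L M Rq"
  proof -
    have "integral\<^sup>L M gap = integral\<^sup>L M (\<lambda>s. R s - Rq s)"
      by (rule Bochner_Integration.integral_cong[OF refl]) (auto simp: hgap)
    then show ?thesis using iR iRq by simp
  qed
  have "integral\<^sup>L M Rq \<le> integral\<^sup>L M (\<lambda>s. (\<Sum>a\<in>P. R (T a s)) / real (card P))"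
    by (rule integral_mono[OF iRq avg_integral(1)[OF fin ne T iR]]) (auto simp: hR)
  also have "\<dots> = integral\<^sup>L M R" by (rule avg_integral(2)[OF fin ne T iR])
  finally have "integral\<^sup>L M Rq \<le> integral\<^sup>L M R" .
  then show ?thesis using 1 EUq Ereg Ereg' Egap by simp
qed



lemma sup_upper:
  assumes "max_attained V g p" "v \<in> profiles V" "b \<in> bids V"
  shows "utility g p i (v i) (v(i:=b)) x y \<le> (SUP b\<in>bids V. utility g p i (v i) (v(i:=b)) x y)"
proof -
  obtain b0 where "b0 \<in> bids V" and m: "\<forall>b'\<in>bids V. utility g p i (v i) (v(i := b')) x y \<le> utility g p i (v i) (v(i := b0)) x y"
    using assms(1,2) unfolding max_attained_def by blast
  then have "bdd_above ((\<lambda>b. utility g p i (v i) (v(i:=b)) x y) ` bids V)"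
    by (auto intro!: bdd_aboveI)
  then show ?thesis using assms(3) by (rule cSUP_upper2) simp
qed

lemma sup_max:
  assumes "max_attained V g p" "v \<in> profiles V"
  shows "\<exists>b0\<in>bids V. (SUP b\<in>bids V. utility g p i (v i) (v(i:=b)) x y) = utility g p i (v i) (v(i:=b0)) x y"
proof -
  obtain b0 where b0: "b0 \<in> bids V" and m: "\<forall>b'\<in>bids V. utility g p i (v i) (v(i := b')) x y \<le> utility g p i (v i) (v(i := b0)) x y"
    using assms(1,2) unfolding max_attained_def by blast
  have "(SUP b\<in>bids V. utility g p i (v i) (v(i:=b)) x y) = utility g p i (v i) (v(i:=b0)) x y"
    unfolding image_image[symmetric]
    by (rule cSup_eq_maximum) (use b0 m in auto)
  then show ?thesis using b0 by blast
qed

lemma row_bids: "v \<in> profiles V \<Longrightarrow> v i \<in> bids V"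
  by (simp add: profiles_def bids_def)

lemma gap_eq:
  fixes g :: "('n::finite,'m::finite,'x,'y) alloc"
  assumes "max_attained V g p" "v \<in> profiles V"
  shows "(SUP v'\<in>profiles V. \<Sum>i\<in>UNIV. utility g p i (v i) (v(i := v' i)) x y)
     = (\<Sum>i\<in>UNIV. SUP b\<in>bids V. utility g p i (v i) (v(i:=b)) x y)"
proof -
  have "\<forall>i. \<exists>b0\<in>bids V. (SUP b\<in>bids V. utility g p i (v i) (v(i:=b)) x y) = utility g p i (v i) (v(i:=b0)) x y"
    using sup_max[OF assms] by blast
  then obtain B where B: "\<And>i. B i \<in> bids V"
    "\<And>i. (SUP b\<in>bids V. utility g p i (v i) (v(i:=b)) x y) = utility g p i (v i) (v(i:=B i)) x y"
    by metis
  have Bp: "B \<in> profiles V" using B(1) by (simp add: profiles_def bids_def)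
  show ?thesis
    unfolding image_image[symmetric]
  proof (rule cSup_eq_maximum)
    show "(\<Sum>i\<in>UNIV. SUP b\<in>bids V. utility g p i (v i) (v(i:=b)) x y)
      \<in> (\<lambda>v'. \<Sum>i\<in>UNIV. utility g p i (v i) (v(i := v' i)) x y) ` profiles V"
      using Bp B(2) by auto
    fix z assume "z \<in> (\<lambda>v'. \<Sum>i\<in>UNIV. utility g p i (v i) (v(i := v' i)) x y) ` profiles V"
    then obtain v' where v': "v' \<in> profiles V" "z = (\<Sum>i\<in>UNIV. utility g p i (v i) (v(i := v' i)) x y)"
      by auto
    show "z \<le> (\<Sum>i\<in>UNIV. SUP b\<in>bids V. utility g p i (v i) (v(i:=b)) x y)"
      unfolding v'(2) by (rule sum_mono) (rule sup_upper[OF assms row_bids[OF v'(1)]])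
  qed
qed

lemma Q1_utility:
  fixes g :: "('n::finite,'m::finite,'x,'y) alloc"
  shows "utility (Q1g g) (Q1p p) i vi w x y
    = (\<Sum>\<pi>\<in>{\<pi>. \<pi> permutes (UNIV::'n set)}. utility g p (inv \<pi> i) vi (\<lambda>k. w (\<pi> k)) (\<lambda>k. x (\<pi> k)) y)
       / real (fact CARD('n))"
  unfolding utility_def Q1g_def Q1p_def
  by (simp add: sum_divide_distrib[symmetric] sum_distrib_right sum_subtractf diff_divide_distrib
      times_divide_eq_left[symmetric] sum.swap[where A=UNIV])

lemma Q2_utility:
  fixes g :: "('n::finite,'m::finite,'x,'y) alloc"
  shows "utility (Q2g g) (Q2p p) i vi w x y
    = (\<Sum>\<tau>\<in>{\<tau>. \<tau> permutes (UNIV::'m set)}. utility g p i (\<lambda>l. vi (\<tau> l)) (\<lambda>k l. w k (\<tau> l)) x (\<lambda>l. y (\<tau> l)))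
       / real (fact CARD('m))"
proof -
  have r: "(\<Sum>j\<in>UNIV. G (inv \<tau> j) * vi j) = (\<Sum>l\<in>UNIV. G l * vi (\<tau> l))"
    if "\<tau> permutes (UNIV::'m set)" for \<tau> and G :: "'m \<Rightarrow> real"
    using sum.permute[OF that, of "\<lambda>j. G (inv \<tau> j) * vi j"] that
    by (simp add: o_def permutes_inverses)
  show ?thesis
    unfolding utility_def Q2g_def Q2p_def
    apply (simp add: sum_divide_distrib[symmetric] sum_distrib_right sum_subtractf diff_divide_distrib
      times_divide_eq_left[symmetric] sum.swap[where A=UNIV])
    apply (rule sum.cong[OF refl])
    apply (rule r)
    apply simp
    done
qed



definition Pf :: "('n::finite,'m::finite,'x,'y) pay \<Rightarrow> ('n,'m) prof \<times> ('n \<Rightarrow> 'x) \<times> ('m \<Rightarrow> 'y) \<Rightarrow> real" where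
  "Pf p = (\<lambda>(v,x,y). \<Sum>i\<in>UNIV. p v x y i)"
definition Uf :: "('n::finite,'m::finite,'x,'y) alloc \<Rightarrow> ('n,'m,'x,'y) pay \<Rightarrow> ('n,'m) prof \<times> ('n \<Rightarrow> 'x) \<times> ('m \<Rightarrow> 'y) \<Rightarrow> real" where
  "Uf g p = (\<lambda>(v,x,y). \<Sum>i\<in>UNIV. utility g p i (v i) v x y)"
definition Rf :: "real set \<Rightarrow> ('n::finite,'m::finite,'x,'y) alloc \<Rightarrow> ('n,'m,'x,'y) pay \<Rightarrow> ('n,'m) prof \<times> ('n \<Rightarrow> 'x) \<times> ('m \<Rightarrow> 'y) \<Rightarrow> real" where
  "Rf V g p = (\<lambda>(v,x,y). \<Sum>i\<in>UNIV. SUP b\<in>bids V. utility g p i (v i) (v(i:=b)) x y)"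

lemma perm_sum_inv:
  assumes "\<pi> permutes (UNIV::'n::finite set)"
  shows "(\<Sum>i\<in>UNIV. F (inv \<pi> i) (i::'n)) = (\<Sum>k\<in>UNIV. (F k (\<pi> k) :: real))"
  using sum.permute[OF assms, of "\<lambda>i. F (inv \<pi> i) i"] assms
  by (simp add: o_def permutes_inverses)

lemma card_P: "real (card {\<pi>. \<pi> permutes (UNIV::'n::finite set)}) = real (fact CARD('n))"
  by (simp add: card_permutations)

lemma B1:
  fixes p :: "('n::finite,'m::finite,'x,'y) pay"
  shows "Pf (Q1p p) (v,x,y) = (\<Sum>\<pi>\<in>{\<pi>. \<pi> permutes (UNIV::'n set)}. Pf p (bidder_perm \<pi> (v,x,y)))
     / real (card {\<pi>. \<pi> permutes (UNIV::'n set)})"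
proof -
  have "Pf (Q1p p) (v,x,y) = (\<Sum>\<pi>\<in>{\<pi>. \<pi> permutes (UNIV::'n set)}. \<Sum>i\<in>UNIV.
       p (\<lambda>k. v (\<pi> k)) (\<lambda>k. x (\<pi> k)) y (inv \<pi> i)) / real (fact CARD('n))"
    unfolding Pf_def Q1p_def by (simp add: sum_divide_distrib[symmetric] sum.swap[where A=UNIV])
  also have "\<dots> = (\<Sum>\<pi>\<in>{\<pi>. \<pi> permutes (UNIV::'n set)}. Pf p (bidder_perm \<pi> (v,x,y))) / real (fact CARD('n))"
  proof (intro arg_cong[where f="\<lambda>z. z / _"] sum.cong refl)
    fix \<pi> assume "\<pi> \<in> {\<pi>. \<pi> permutes (UNIV::'n set)}"
    then have pp: "\<pi> permutes (UNIV::'n set)" by simp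
    show "(\<Sum>i\<in>UNIV. p (\<lambda>k. v (\<pi> k)) (\<lambda>k. x (\<pi> k)) y (inv \<pi> i)) = Pf p (bidder_perm \<pi> (v,x,y))"
      using perm_sum_inv[OF pp, of "\<lambda>k i. p (\<lambda>k. v (\<pi> k)) (\<lambda>k. x (\<pi> k)) y k"]
      by (simp add: Pf_def bidder_perm_def)
  qed
  finally show ?thesis by (simp add: card_P)
qed

lemma B2:
  fixes g :: "('n::finite,'m::finite,'x,'y) alloc"
  shows "Uf (Q1g g) (Q1p p) (v,x,y) = (\<Sum>\<pi>\<in>{\<pi>. \<pi> permutes (UNIV::'n set)}. Uf g p (bidder_perm \<pi> (v,x,y)))
     / real (card {\<pi>. \<pi> permutes (UNIV::'n set)})"
proof -
  have "Uf (Q1g g) (Q1p p) (v,x,y) = (\<Sum>\<pi>\<in>{\<pi>. \<pi> permutes (UNIV::'n set)}. \<Sum>i\<in>UNIV.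
       utility g p (inv \<pi> i) (v i) (\<lambda>k. v (\<pi> k)) (\<lambda>k. x (\<pi> k)) y) / real (fact CARD('n))"
    unfolding Uf_def by (simp add: Q1_utility sum_divide_distrib[symmetric] sum.swap[where A=UNIV])
  also have "\<dots> = (\<Sum>\<pi>\<in>{\<pi>. \<pi> permutes (UNIV::'n set)}. Uf g p (bidder_perm \<pi> (v,x,y))) / real (fact CARD('n))"
  proof (intro arg_cong[where f="\<lambda>z. z / _"] sum.cong refl)
    fix \<pi> assume "\<pi> \<in> {\<pi>. \<pi> permutes (UNIV::'n set)}"
    then have pp: "\<pi> permutes (UNIV::'n set)" by simp
    show "(\<Sum>i\<in>UNIV. utility g p (inv \<pi> i) (v i) (\<lambda>k. v (\<pi> k)) (\<lambda>k. x (\<pi> k)) y) = Uf g p (bidder_perm \<pi> (v,x,y))"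
      using perm_sum_inv[OF pp, of "\<lambda>k i. utility g p k (v i) (\<lambda>k. v (\<pi> k)) (\<lambda>k. x (\<pi> k)) y"]
      by (simp add: Uf_def bidder_perm_def)
  qed
  finally show ?thesis by (simp add: card_P)
qed



lemma B3:
  fixes g :: "('n::finite,'m::finite,'x,'y) alloc"
  assumes att: "max_attained V g p" and vp: "v \<in> profiles V"
  shows "Rf V (Q1g g) (Q1p p) (v,x,y) \<le> (\<Sum>\<pi>\<in>{\<pi>. \<pi> permutes (UNIV::'n set)}. Rf V g p (bidder_perm \<pi> (v,x,y)))
     / real (card {\<pi>. \<pi> permutes (UNIV::'n set)})"
proof -
  define S where "S \<pi> k = (SUP b\<in>bids V. utility g p k (v (\<pi> k)) ((\<lambda>k. v (\<pi> k))(k:=b)) (\<lambda>k. x (\<pi> k)) y)"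
    for \<pi> :: "'n \<Rightarrow> 'n" and k
  have each: "(SUP b\<in>bids V. utility (Q1g g) (Q1p p) i (v i) (v(i:=b)) x y)
     \<le> (\<Sum>\<pi>\<in>{\<pi>. \<pi> permutes (UNIV::'n set)}. S \<pi> (inv \<pi> i)) / real (fact CARD('n))" for i
  proof (rule cSUP_least)
    show "(bids V :: ('m \<Rightarrow> real) set) \<noteq> {}" using row_bids[OF vp, of i] by blast
    fix b :: "'m \<Rightarrow> real" assume b: "b \<in> bids V"
    have "(\<Sum>\<pi>\<in>{\<pi>. \<pi> permutes (UNIV::'n set)}. utility g p (inv \<pi> i) (v i) (\<lambda>k. (v(i := b)) (\<pi> k)) (\<lambda>k. x (\<pi> k)) y)
       \<le> (\<Sum>\<pi>\<in>{\<pi>. \<pi> permutes (UNIV::'n set)}. S \<pi> (inv \<pi> i))"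
    proof (rule sum_mono)
      fix \<pi> assume "\<pi> \<in> {\<pi>. \<pi> permutes (UNIV::'n set)}"
      then have pp: "\<pi> permutes (UNIV::'n set)" by simp
      have e1: "(\<lambda>k. (v(i := b)) (\<pi> k)) = (\<lambda>k. v (\<pi> k))(inv \<pi> i := b)"
      proof
        fix k
        have h: "(\<pi> k = i) = (k = inv \<pi> i)"
          using permutes_inv_eq[OF pp, of i k] by argo
        show "(v(i := b)) (\<pi> k) = ((\<lambda>k. v (\<pi> k))(inv \<pi> i := b)) k"
          unfolding fun_upd_apply h by (rule refl)
      qed
      have e2: "v (\<pi> (inv \<pi> i)) = v i" using permutes_inverses[OF pp] by simp
      have vpp: "(\<lambda>k. v (\<pi> k)) \<in> profiles V" using vp by (simp add: profiles_def)
      have "utility g p (inv \<pi> i) (v (\<pi> (inv \<pi> i))) ((\<lambda>k. v (\<pi> k))(inv \<pi> i := b)) (\<lambda>k. x (\<pi> k)) y \<le> S \<pi> (inv \<pi> i)"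
        unfolding S_def by (fact sup_upper[OF att vpp b, of "inv \<pi> i" "\<lambda>k. x (\<pi> k)" y])
      then show "utility g p (inv \<pi> i) (v i) (\<lambda>k. (v(i := b)) (\<pi> k)) (\<lambda>k. x (\<pi> k)) y \<le> S \<pi> (inv \<pi> i)"
        unfolding e1 e2 .
    qed
    then show "utility (Q1g g) (Q1p p) i (v i) (v(i:=b)) x y
       \<le> (\<Sum>\<pi>\<in>{\<pi>. \<pi> permutes (UNIV::'n set)}. S \<pi> (inv \<pi> i)) / real (fact CARD('n))"
      unfolding Q1_utility by (rule divide_right_mono) simp
  qed
  have "Rf V (Q1g g) (Q1p p) (v,x,y) \<le> (\<Sum>i\<in>UNIV. (\<Sum>\<pi>\<in>{\<pi>. \<pi> permutes (UNIV::'n set)}. S \<pi> (inv \<pi> i)) / real (fact CARD('n)))"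
    unfolding Rf_def prod.case by (rule sum_mono) (rule each)
  also have "\<dots> = (\<Sum>\<pi>\<in>{\<pi>. \<pi> permutes (UNIV::'n set)}. \<Sum>i\<in>UNIV. S \<pi> (inv \<pi> i)) / real (fact CARD('n))"
    by (simp only: sum_divide_distrib[symmetric] sum.swap[where A=UNIV])
  also have "\<dots> = (\<Sum>\<pi>\<in>{\<pi>. \<pi> permutes (UNIV::'n set)}. Rf V g p (bidder_perm \<pi> (v,x,y))) / real (fact CARD('n))"
  proof (intro arg_cong[where f="\<lambda>z. z / _"] sum.cong refl)
    fix \<pi> assume "\<pi> \<in> {\<pi>. \<pi> permutes (UNIV::'n set)}"
    then have pp: "\<pi> permutes (UNIV::'n set)" by simp
    show "(\<Sum>i\<in>UNIV. S \<pi> (inv \<pi> i)) = Rf V g p (bidder_perm \<pi> (v,x,y))"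
    proof -
      have "Rf V g p (bidder_perm \<pi> (v,x,y)) = (\<Sum>k\<in>UNIV. S \<pi> k)"
        by (simp only: Rf_def bidder_perm_def prod.case S_def)
      then show ?thesis using perm_sum_inv[OF pp, of "\<lambda>k i. S \<pi> k"] by (simp only:)
    qed
  qed
  finally show ?thesis by (simp only: card_P)
qed



lemma I1:
  fixes p :: "('n::finite,'m::finite,'x,'y) pay"
  shows "Pf (Q2p p) (v,x,y) = (\<Sum>\<tau>\<in>{\<tau>. \<tau> permutes (UNIV::'m set)}. Pf p (item_perm \<tau> (v,x,y)))
     / real (card {\<tau>. \<tau> permutes (UNIV::'m set)})"
  unfolding Pf_def Q2p_def item_perm_def card_P
  by (simp add: sum_divide_distrib[symmetric] sum.swap[where A=UNIV])

lemma I2: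
  fixes g :: "('n::finite,'m::finite,'x,'y) alloc"
  shows "Uf (Q2g g) (Q2p p) (v,x,y) = (\<Sum>\<tau>\<in>{\<tau>. \<tau> permutes (UNIV::'m set)}. Uf g p (item_perm \<tau> (v,x,y)))
     / real (card {\<tau>. \<tau> permutes (UNIV::'m set)})"
  unfolding Uf_def item_perm_def card_P
  by (simp add: Q2_utility sum_divide_distrib[symmetric] sum.swap[where A=UNIV])

lemma I3:
  fixes g :: "('n::finite,'m::finite,'x,'y) alloc"
  assumes att: "max_attained V g p" and vp: "v \<in> profiles V"
  shows "Rf V (Q2g g) (Q2p p) (v,x,y) \<le> (\<Sum>\<tau>\<in>{\<tau>. \<tau> permutes (UNIV::'m set)}. Rf V g p (item_perm \<tau> (v,x,y)))
     / real (card {\<tau>. \<tau> permutes (UNIV::'m set)})"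
proof -
  define S where "S \<tau> k = (SUP b\<in>bids V. utility g p k (\<lambda>l. v k (\<tau> l)) ((\<lambda>k l. v k (\<tau> l))(k:=b)) x (\<lambda>l. y (\<tau> l)))"
    for \<tau> :: "'m \<Rightarrow> 'm" and k
  have each: "(SUP b\<in>bids V. utility (Q2g g) (Q2p p) i (v i) (v(i:=b)) x y)
     \<le> (\<Sum>\<tau>\<in>{\<tau>. \<tau> permutes (UNIV::'m set)}. S \<tau> i) / real (fact CARD('m))" for i
  proof (rule cSUP_least)
    show "(bids V :: ('m \<Rightarrow> real) set) \<noteq> {}" using row_bids[OF vp, of i] by blast
    fix b :: "'m \<Rightarrow> real" assume b: "b \<in> bids V"
    have "(\<Sum>\<tau>\<in>{\<tau>. \<tau> permutes (UNIV::'m set)}. utility g p i (\<lambda>l. v i (\<tau> l)) (\<lambda>k l. (v(i := b)) k (\<tau> l)) x (\<lambda>l. y (\<tau> l)))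
       \<le> (\<Sum>\<tau>\<in>{\<tau>. \<tau> permutes (UNIV::'m set)}. S \<tau> i)"
    proof (rule sum_mono)
      fix \<tau> :: "'m \<Rightarrow> 'm" assume "\<tau> \<in> {\<tau>. \<tau> permutes (UNIV::'m set)}"
      have e1: "(\<lambda>k l. (v(i := b)) k (\<tau> l)) = (\<lambda>k l. v k (\<tau> l))(i := (\<lambda>l. b (\<tau> l)))"
        by (auto simp: fun_eq_iff)
      have bt: "(\<lambda>l. b (\<tau> l)) \<in> bids V" using b by (simp add: bids_def)
      have vpp: "(\<lambda>k l. v k (\<tau> l)) \<in> profiles V" using vp by (simp add: profiles_def)
      show "utility g p i (\<lambda>l. v i (\<tau> l)) (\<lambda>k l. (v(i := b)) k (\<tau> l)) x (\<lambda>l. y (\<tau> l)) \<le> S \<tau> i"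
        unfolding e1 S_def by (fact sup_upper[OF att vpp bt, of i x "\<lambda>l. y (\<tau> l)"])
    qed
    then show "utility (Q2g g) (Q2p p) i (v i) (v(i:=b)) x y
       \<le> (\<Sum>\<tau>\<in>{\<tau>. \<tau> permutes (UNIV::'m set)}. S \<tau> i) / real (fact CARD('m))"
      unfolding Q2_utility by (rule divide_right_mono) simp
  qed
  have "Rf V (Q2g g) (Q2p p) (v,x,y) \<le> (\<Sum>i\<in>UNIV. (\<Sum>\<tau>\<in>{\<tau>. \<tau> permutes (UNIV::'m set)}. S \<tau> i) / real (fact CARD('m)))"
    unfolding Rf_def prod.case by (rule sum_mono) (rule each)
  also have "\<dots> = (\<Sum>\<tau>\<in>{\<tau>. \<tau> permutes (UNIV::'m set)}. \<Sum>i\<in>UNIV. S \<tau> i) / real (fact CARD('m))"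
    by (simp only: sum_divide_distrib[symmetric] sum.swap[where A=UNIV])
  also have "\<dots> = (\<Sum>\<tau>\<in>{\<tau>. \<tau> permutes (UNIV::'m set)}. Rf V g p (item_perm \<tau> (v,x,y))) / real (fact CARD('m))"
    by (simp only: Rf_def item_perm_def prod.case S_def)
  finally show ?thesis by (simp only: card_P)
qed



lemma int_lemma:
  fixes g :: "('n::finite,'m::finite,'x,'y) alloc"
  assumes "\<forall>i. integrable M (\<lambda>(v,x,y). p v x y i) \<and> integrable M (\<lambda>(v,x,y). \<Sum>j\<in>UNIV. g v x y i j * v i j)
     \<and> integrable M (\<lambda>(v,x,y). regret V g p i v x y)"
  shows "integrable M (Pf p)" "integrable M (Uf g p)" "integrable M (Rf V g p)"
proof -
  have ip: "integrable M (\<lambda>(v,x,y). p v x y i)" for i using assms by blast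
  have ig: "integrable M (\<lambda>(v,x,y). \<Sum>j\<in>UNIV. g v x y i j * v i j)" for i using assms by blast
  have ir: "integrable M (\<lambda>(v,x,y). regret V g p i v x y)" for i using assms by blast
  have "Pf p = (\<lambda>s. \<Sum>i\<in>UNIV. (\<lambda>(v,x,y). p v x y i) s)"
    by (simp add: Pf_def fun_eq_iff split: prod.split)
  then show "integrable M (Pf p)" using ip by simp
  have "Uf g p = (\<lambda>s. \<Sum>i\<in>UNIV. (\<lambda>(v,x,y). \<Sum>j\<in>UNIV. g v x y i j * v i j) s - (\<lambda>(v,x,y). p v x y i) s)"
    by (simp add: Uf_def utility_def fun_eq_iff split: prod.split)
  moreover have "integrable M (\<lambda>s. \<Sum>i\<in>UNIV. (\<lambda>(v,x,y). \<Sum>j\<in>UNIV. g v x y i j * v i j) s - (\<lambda>(v,x,y). p v x y i) s)"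
    by (intro Bochner_Integration.integrable_sum Bochner_Integration.integrable_diff ip ig)
  ultimately show "integrable M (Uf g p)" by (simp only:)
  have "Rf V g p = (\<lambda>s. \<Sum>i\<in>UNIV. (\<lambda>(v,x,y). regret V g p i v x y) s + ((\<lambda>(v,x,y). \<Sum>j\<in>UNIV. g v x y i j * v i j) s - (\<lambda>(v,x,y). p v x y i) s))"
    by (simp add: Rf_def regret_def utility_def fun_eq_iff split: prod.split)
  moreover have "integrable M (\<lambda>s. \<Sum>i\<in>UNIV. (\<lambda>(v,x,y). regret V g p i v x y) s + ((\<lambda>(v,x,y). \<Sum>j\<in>UNIV. g v x y i j * v i j) s - (\<lambda>(v,x,y). p v x y i) s))"
    by (intro Bochner_Integration.integrable_sum Bochner_Integration.integrable_diff Bochner_Integration.integrable_add ip ig ir)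
  ultimately show "integrable M (Rf V g p)" by (simp only:)
qed

lemma forms:
  fixes g :: "('n::finite,'m::finite,'x,'y) alloc"
  shows "(\<lambda>s. case s of (v,x,y) \<Rightarrow> \<Sum>i\<in>UNIV. p v x y i) = Pf p"
    and "(\<lambda>s. case s of (v,x,y) \<Rightarrow> \<Sum>i\<in>UNIV. regret V g p i v x y) = (\<lambda>s. Rf V g p s - Uf g p s)"
  by (auto simp: Pf_def Rf_def Uf_def regret_def fun_eq_iff sum_subtractf split: prod.split)

lemma gap_lemma:
  fixes g :: "('n::finite,'m::finite,'x,'y) alloc"
  assumes "max_attained V g p" "max_attained V g' p'" "v \<in> profiles V"
  shows "regret_gap V g p g' p' v x y = Rf V g p (v,x,y) - Rf V g' p' (v,x,y)"
  unfolding regret_gap_def Rf_def prod.case gap_eq[OF assms(1,3)] gap_eq[OF assms(2,3)] ..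

theorem theorem1:
  fixes V :: "real set"
    and g :: "('n::finite,'m::finite,'x,'y) alloc"
    and p :: "('n,'m,'x,'y) pay"
    and M :: "(('n,'m) prof \<times> ('n \<Rightarrow> 'x) \<times> ('m \<Rightarrow> 'y)) measure"
  assumes V_nonneg: "V \<subseteq> {0..}"
    and prob: "prob_space M"
    and in_V: "space M \<subseteq> {(v,x,y). v \<in> profiles V}"
    and attained: "max_attained V g p"
  shows
   "(bidder_symmetric M \<and> max_attained V (Q1g g) (Q1p p)
       \<and> finite_expectations M V g p (Q1g g) (Q1p p)
     \<longrightarrow>
       (\<integral>s. (case s of (v,x,y) \<Rightarrow> \<Sum>i\<in>UNIV. Q1p p v x y i) \<partial>M)
         = (\<integral>s. (case s of (v,x,y) \<Rightarrow> \<Sum>i\<in>UNIV. p v x y i) \<partial>M)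
     \<and> (\<integral>s. (case s of (v,x,y) \<Rightarrow> \<Sum>i\<in>UNIV. regret V g p i v x y) \<partial>M)
         - (\<integral>s. (case s of (v,x,y) \<Rightarrow> \<Sum>i\<in>UNIV. regret V (Q1g g) (Q1p p) i v x y) \<partial>M)
         = (\<integral>s. (case s of (v,x,y) \<Rightarrow> regret_gap V g p (Q1g g) (Q1p p) v x y) \<partial>M)
     \<and> (\<integral>s. (case s of (v,x,y) \<Rightarrow> regret_gap V g p (Q1g g) (Q1p p) v x y) \<partial>M) \<ge> 0)
  \<and> (item_symmetric M \<and> max_attained V (Q2g g) (Q2p p)
       \<and> finite_expectations M V g p (Q2g g) (Q2p p)
     \<longrightarrow>
       (\<integral>s. (case s of (v,x,y) \<Rightarrow> \<Sum>i\<in>UNIV. Q2p p v x y i) \<partial>M)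
         = (\<integral>s. (case s of (v,x,y) \<Rightarrow> \<Sum>i\<in>UNIV. p v x y i) \<partial>M)
     \<and> (\<integral>s. (case s of (v,x,y) \<Rightarrow> \<Sum>i\<in>UNIV. regret V g p i v x y) \<partial>M)
         - (\<integral>s. (case s of (v,x,y) \<Rightarrow> \<Sum>i\<in>UNIV. regret V (Q2g g) (Q2p p) i v x y) \<partial>M)
         = (\<integral>s. (case s of (v,x,y) \<Rightarrow> regret_gap V g p (Q2g g) (Q2p p) v x y) \<partial>M)
     \<and> (\<integral>s. (case s of (v,x,y) \<Rightarrow> regret_gap V g p (Q2g g) (Q2p p) v x y) \<partial>M) \<ge> 0)"
proof -
  have sp: "\<exists>v x y. s = (v,x,y) \<and> v \<in> profiles V" if "s \<in> space M" for s
    using in_V that by auto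
  have finP1: "finite {\<pi>. \<pi> permutes (UNIV::'n set)}" by (simp add: finite_permutations)
  have neP1: "{\<pi>. \<pi> permutes (UNIV::'n set)} \<noteq> {}" using permutes_id by blast
  have finP2: "finite {\<pi>. \<pi> permutes (UNIV::'m set)}" by (simp add: finite_permutations)
  have neP2: "{\<pi>. \<pi> permutes (UNIV::'m set)} \<noteq> {}" using permutes_id by blast
  have part1: "integral\<^sup>L M (Pf (Q1p p)) = integral\<^sup>L M (Pf p)
    \<and> integral\<^sup>L M (\<lambda>s. Rf V g p s - Uf g p s) - integral\<^sup>L M (\<lambda>s. Rf V (Q1g g) (Q1p p) s - Uf (Q1g g) (Q1p p) s)
       = integral\<^sup>L M (\<lambda>s. case s of (v,x,y) \<Rightarrow> regret_gap V g p (Q1g g) (Q1p p) v x y)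
    \<and> integral\<^sup>L M (\<lambda>s. case s of (v,x,y) \<Rightarrow> regret_gap V g p (Q1g g) (Q1p p) v x y) \<ge> 0"
    if sym: "bidder_symmetric M" and att2: "max_attained V (Q1g g) (Q1p p)"
      and fe: "finite_expectations M V g p (Q1g g) (Q1p p)"
  proof (rule abstract_main[where P="{\<pi>. \<pi> permutes (UNIV::'n set)}" and T=bidder_perm
        and U="Uf g p" and Uq="Uf (Q1g g) (Q1p p)" and R="Rf V g p" and Rq="Rf V (Q1g g) (Q1p p)"])
    show "finite {\<pi>. \<pi> permutes (UNIV::'n set)}" by (fact finP1)
    show "{\<pi>. \<pi> permutes (UNIV::'n set)} \<noteq> {}" by (fact neP1)
    show "\<And>a. a \<in> {\<pi>. \<pi> permutes UNIV} \<Longrightarrow> bidder_perm a \<in> M \<rightarrow>\<^sub>M M \<and> distr M M (bidder_perm a) = M"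
      using sym unfolding bidder_symmetric_def by blast
    show "\<And>s. s \<in> space M \<Longrightarrow> Pf (Q1p p) s = (\<Sum>a\<in>{\<pi>. \<pi> permutes UNIV}. Pf p (bidder_perm a s)) / real (card {\<pi>. \<pi> permutes (UNIV::'n set)})"
      using sp B1 by metis
    show "\<And>s. s \<in> space M \<Longrightarrow> Uf (Q1g g) (Q1p p) s = (\<Sum>a\<in>{\<pi>. \<pi> permutes UNIV}. Uf g p (bidder_perm a s)) / real (card {\<pi>. \<pi> permutes (UNIV::'n set)})"
      using sp B2 by metis
    show "\<And>s. s \<in> space M \<Longrightarrow> Rf V (Q1g g) (Q1p p) s \<le> (\<Sum>a\<in>{\<pi>. \<pi> permutes UNIV}. Rf V g p (bidder_perm a s)) / real (card {\<pi>. \<pi> permutes (UNIV::'n set)})"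
      using sp B3[OF attained] by metis
    show "\<And>s. s \<in> space M \<Longrightarrow> (case s of (v,x,y) \<Rightarrow> regret_gap V g p (Q1g g) (Q1p p) v x y) = Rf V g p s - Rf V (Q1g g) (Q1p p) s"
      using sp gap_lemma[OF attained att2] by fastforce
    show "\<And>s. s \<in> space M \<Longrightarrow> Rf V g p s - Uf g p s = Rf V g p s - Uf g p s" by simp
    show "\<And>s. s \<in> space M \<Longrightarrow> Rf V (Q1g g) (Q1p p) s - Uf (Q1g g) (Q1p p) s = Rf V (Q1g g) (Q1p p) s - Uf (Q1g g) (Q1p p) s" by simp
    have fe1: "\<forall>i. integrable M (\<lambda>(v,x,y). p v x y i) \<and> integrable M (\<lambda>(v,x,y). \<Sum>j\<in>UNIV. g v x y i j * v i j)
     \<and> integrable M (\<lambda>(v,x,y). regret V g p i v x y)"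
      and fe2: "\<forall>i. integrable M (\<lambda>(v,x,y). Q1p p v x y i) \<and> integrable M (\<lambda>(v,x,y). \<Sum>j\<in>UNIV. Q1g g v x y i j * v i j)
     \<and> integrable M (\<lambda>(v,x,y). regret V (Q1g g) (Q1p p) i v x y)"
      using fe unfolding finite_expectations_def by blast+
    show "integrable M (Pf p)" "integrable M (Uf g p)" "integrable M (Rf V g p)"
      using int_lemma[OF fe1] by blast+
    show "integrable M (Rf V (Q1g g) (Q1p p))" using int_lemma[OF fe2] by blast
  qed
  have part2: "integral\<^sup>L M (Pf (Q2p p)) = integral\<^sup>L M (Pf p)
    \<and> integral\<^sup>L M (\<lambda>s. Rf V g p s - Uf g p s) - integral\<^sup>L M (\<lambda>s. Rf V (Q2g g) (Q2p p) s - Uf (Q2g g) (Q2p p) s)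
       = integral\<^sup>L M (\<lambda>s. case s of (v,x,y) \<Rightarrow> regret_gap V g p (Q2g g) (Q2p p) v x y)
    \<and> integral\<^sup>L M (\<lambda>s. case s of (v,x,y) \<Rightarrow> regret_gap V g p (Q2g g) (Q2p p) v x y) \<ge> 0"
    if sym: "item_symmetric M" and att2: "max_attained V (Q2g g) (Q2p p)"
      and fe: "finite_expectations M V g p (Q2g g) (Q2p p)"
  proof (rule abstract_main[where P="{\<pi>. \<pi> permutes (UNIV::'m set)}" and T=item_perm
        and U="Uf g p" and Uq="Uf (Q2g g) (Q2p p)" and R="Rf V g p" and Rq="Rf V (Q2g g) (Q2p p)"])
    show "finite {\<pi>. \<pi> permutes (UNIV::'m set)}" by (fact finP2)
    show "{\<pi>. \<pi> permutes (UNIV::'m set)} \<noteq> {}" by (fact neP2)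
    show "\<And>a. a \<in> {\<pi>. \<pi> permutes UNIV} \<Longrightarrow> item_perm a \<in> M \<rightarrow>\<^sub>M M \<and> distr M M (item_perm a) = M"
      using sym unfolding item_symmetric_def by blast
    show "\<And>s. s \<in> space M \<Longrightarrow> Pf (Q2p p) s = (\<Sum>a\<in>{\<pi>. \<pi> permutes UNIV}. Pf p (item_perm a s)) / real (card {\<pi>. \<pi> permutes (UNIV::'m set)})"
      using sp I1 by metis
    show "\<And>s. s \<in> space M \<Longrightarrow> Uf (Q2g g) (Q2p p) s = (\<Sum>a\<in>{\<pi>. \<pi> permutes UNIV}. Uf g p (item_perm a s)) / real (card {\<pi>. \<pi> permutes (UNIV::'m set)})"
      using sp I2 by metis
    show "\<And>s. s \<in> space M \<Longrightarrow> Rf V (Q2g g) (Q2p p) s \<le> (\<Sum>a\<in>{\<pi>. \<pi> permutes UNIV}. Rf V g p (item_perm a s)) / real (card {\<pi>. \<pi> permutes (UNIV::'m set)})"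
      using sp I3[OF attained] by metis
    show "\<And>s. s \<in> space M \<Longrightarrow> (case s of (v,x,y) \<Rightarrow> regret_gap V g p (Q2g g) (Q2p p) v x y) = Rf V g p s - Rf V (Q2g g) (Q2p p) s"
      using sp gap_lemma[OF attained att2] by fastforce
    show "\<And>s. s \<in> space M \<Longrightarrow> Rf V g p s - Uf g p s = Rf V g p s - Uf g p s" by simp
    show "\<And>s. s \<in> space M \<Longrightarrow> Rf V (Q2g g) (Q2p p) s - Uf (Q2g g) (Q2p p) s = Rf V (Q2g g) (Q2p p) s - Uf (Q2g g) (Q2p p) s" by simp
    have fe1: "\<forall>i. integrable M (\<lambda>(v,x,y). p v x y i) \<and> integrable M (\<lambda>(v,x,y). \<Sum>j\<in>UNIV. g v x y i j * v i j)
     \<and> integrable M (\<lambda>(v,x,y). regret V g p i v x y)"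
      and fe2: "\<forall>i. integrable M (\<lambda>(v,x,y). Q2p p v x y i) \<and> integrable M (\<lambda>(v,x,y). \<Sum>j\<in>UNIV. Q2g g v x y i j * v i j)
     \<and> integrable M (\<lambda>(v,x,y). regret V (Q2g g) (Q2p p) i v x y)"
      using fe unfolding finite_expectations_def by blast+
    show "integrable M (Pf p)" "integrable M (Uf g p)" "integrable M (Rf V g p)"
      using int_lemma[OF fe1] by blast+
    show "integrable M (Rf V (Q2g g) (Q2p p))" using int_lemma[OF fe2] by blast
  qed
  show ?thesis
    unfolding forms(2) forms(1) using part1 part2 by blast
qed


end
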